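(* Let $k\ge1$. For every $1\le j\le k$, the function $D_{k,j}$ is nonincreasing on $[0,1)$.
   Context: For an integer $k\ge1$, $f_k:[0,1]\to[0,1]$ denotes the unique decreasing function satisfying $f_k(x)^k-f_k(x)^{k+1}=x^k-x^{k+1}$ for all $x\in[0,1]$; it is continuous with $f_k(0)=1$, $f_k(1)=0$. For $1\le j\le k$ and $y\in[0,1)$ define $T_{k,j}(y):=\dfrac{(1-y)\,y^{j-1}}{f_k(y)^j}$ and $D_{k,j}(y):=T_{k,1}(y)+T_{k,2}(y)+\dots+T_{k,j}(y)$. *)

theory Defs
  imports "HOL-Analysis.Analysis"
begin

text \<open>f_k: the unique decreasing function [0,1] -> [0,1] with
  f(x)^k - f(x)^(k+1) = x^k - x^(k+1). Values outside [0,1] are fixed to 0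
  so that the function is uniquely determined.\<close>
definition fk :: "nat \<Rightarrow> real \<Rightarrow> real" where
  "fk k = (THE f. antimono_on {0..1} f \<and> (\<forall>x\<in>{0..1}. f x \<in> {0..1}) \<and>
      (\<forall>x\<in>{0..1}. f x ^ k - f x ^ (k+1) = x ^ k - x ^ (k+1)) \<and>
      (\<forall>x. x \<notin> {0..1} \<longrightarrow> f x = 0))"

definition Tkj :: "nat \<Rightarrow> nat \<Rightarrow> real \<Rightarrow> real" where
  "Tkj k j y = (1 - y) * y ^ (j - 1) / fk k y ^ j"

definition Dkj :: "nat \<Rightarrow> nat \<Rightarrow> real \<Rightarrow> real" where
  "Dkj k j y = (\<Sum>i=1..j. Tkj k i y)"

end

theory Submission
  imports Defs
begin

definition S :: "nat \<Rightarrow> real \<Rightarrow> real" where "S n r = (\<Sum>i<n. r ^ i)"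
definition yr :: "nat \<Rightarrow> real \<Rightarrow> real" where "yr k r = r * S k r / S (Suc k) r"
definition fr :: "nat \<Rightarrow> real \<Rightarrow> real" where "fr k r = S k r / S (Suc k) r"

lemma S_nonneg: "0 \<le> r \<Longrightarrow> 0 \<le> S n r"
  unfolding S_def by (simp add: sum_nonneg)

lemma S_Suc: "S (Suc n) r = S n r + r ^ n"
  unfolding S_def by simp

lemma S_Suc': "S (Suc n) r = 1 + r * S n r"
  unfolding S_def by (subst sum.lessThan_Suc_shift) (simp add: sum_distrib_left)

lemma S_pos: "0 \<le> r \<Longrightarrow> 1 \<le> n \<Longrightarrow> 1 \<le> S n r"
  using S_Suc'[of "n-1" r] S_nonneg[of r "n-1"] by (cases n) auto

lemma S_one: "S n 1 = real n"
  unfolding S_def by simp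

lemma S_mono: "0 \<le> a \<Longrightarrow> a \<le> b \<Longrightarrow> S n a \<le> S n b"
  unfolding S_def by (intro sum_mono power_mono) auto

lemma S_strict: "0 \<le> a \<Longrightarrow> a < b \<Longrightarrow> 1 \<le> k \<Longrightarrow> S (Suc k) a < S (Suc k) b"
  using S_mono[of a b k] power_strict_mono[of a b k] by (simp add: S_Suc)

lemma one_minus_yr: "0 \<le> r \<Longrightarrow> 1 - yr k r = 1 / S (Suc k) r"
proof -
  assume r: "0 \<le> r"
  have p: "S (Suc k) r > 0" using S_pos[OF r, of "Suc k"] by simp
  show ?thesis unfolding yr_def using p by (simp add: field_simps S_Suc')
qed

lemma one_minus_fr: "0 \<le> r \<Longrightarrow> 1 - fr k r = r ^ k / S (Suc k) r"
proof -
  assume r: "0 \<le> r"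
  have p: "S (Suc k) r > 0" using S_pos[OF r, of "Suc k"] by simp
  show ?thesis unfolding fr_def using p by (simp add: field_simps S_Suc)
qed

lemma yr_strict: "0 \<le> a \<Longrightarrow> a < b \<Longrightarrow> 1 \<le> k \<Longrightarrow> yr k a < yr k b"
proof -
  assume a: "0 \<le> a" "a < b" "1 \<le> k"
  have "1 / S (Suc k) b < 1 / S (Suc k) a"
    using S_strict[OF a] S_pos[OF a(1), of "Suc k"] by (intro divide_strict_left_mono) auto
  then show ?thesis using one_minus_yr[of a k] one_minus_yr[of b k] a by simp
qed

lemma yr_mono_iff: "0 \<le> a \<Longrightarrow> 0 \<le> b \<Longrightarrow> 1 \<le> k \<Longrightarrow> yr k a \<le> yr k b \<longleftrightarrow> a \<le> b"
  by (metis linorder_not_le order_le_less yr_strict)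

lemma fr_anti: "0 \<le> a \<Longrightarrow> a \<le> b \<Longrightarrow> fr k b \<le> fr k a"
proof -
  assume a: "0 \<le> a" "a \<le> b"
  have pa: "S (Suc k) a > 0" "S (Suc k) b > 0" using S_pos[of a "Suc k"] S_pos[of b "Suc k"] a by auto
  have "(\<Sum>i<Suc k. a ^ k * b ^ i) \<le> (\<Sum>i<Suc k. b ^ k * a ^ i)"
  proof (rule sum_mono)
    fix i assume "i \<in> {..<Suc k}"
    then have i: "i \<le> k" by simp
    have "a ^ k * b ^ i = (a^i * b^i) * a ^ (k - i)" using i by (simp add: power_add[symmetric])
    also have "\<dots> \<le> (a^i * b^i) * b ^ (k - i)" using a by (intro mult_left_mono power_mono) auto
    also have "\<dots> = b ^ k * a ^ i" using i by (simp add: power_add[symmetric])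
    finally show "a ^ k * b ^ i \<le> b ^ k * a ^ i" .
  qed
  then have "a ^ k * S (Suc k) b \<le> b ^ k * S (Suc k) a"
    by (simp only: S_def sum_distrib_left)
  then have "a ^ k / S (Suc k) a \<le> b ^ k / S (Suc k) b"
    using pa by (simp add: divide_simps mult.commute)
  then show ?thesis using one_minus_fr[of a k] one_minus_fr[of b k] a by simp
qed

lemma yr_one: "yr k 1 = real k / (real k + 1)"
  unfolding yr_def by (simp add: S_one)
lemma fr_one: "fr k 1 = real k / (real k + 1)"
  unfolding fr_def by (simp add: S_one)

lemma fr_range: "0 \<le> r \<Longrightarrow> 0 \<le> fr k r \<and> fr k r \<le> 1"
  using one_minus_fr[of r k] S_pos[of r "Suc k"] S_nonneg[of r k] S_Suc[of k r] zero_le_power[of r k] unfolding fr_def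
  by (auto simp: divide_simps)

lemma yr_range: "0 \<le> r \<Longrightarrow> 0 \<le> yr k r \<and> yr k r < 1"
  using one_minus_yr[of r k] S_pos[of r "Suc k"] S_nonneg[of r k] unfolding yr_def
  by (auto simp: divide_simps)

lemma yr_rel: "0 \<le> r \<Longrightarrow> fr k r ^ k - fr k r ^ (k+1) = yr k r ^ k - yr k r ^ (k+1)"
proof -
  assume r: "0 \<le> r"
  have "fr k r ^ k - fr k r ^ (k+1) = fr k r ^ k * (1 - fr k r)" by (simp add: algebra_simps)
  also have "\<dots> = (S k r / S (Suc k) r) ^ k * (r ^ k / S (Suc k) r)" using one_minus_fr[OF r] by (simp add: fr_def)
  also have "\<dots> = (r * S k r / S (Suc k) r) ^ k * (1 / S (Suc k) r)"
    by (simp add: power_divide power_mult_distrib)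
  also have "\<dots> = yr k r ^ k * (1 - yr k r)" using one_minus_yr[OF r] by (simp add: yr_def)
  also have "\<dots> = yr k r ^ k - yr k r ^ (k+1)" by (simp add: algebra_simps)
  finally show ?thesis .
qed

lemma yr_cont: "continuous_on {0..R} (yr k)"
proof -
  have "\<forall>x\<in>{0..R}. (\<Sum>i<Suc k. x ^ i) \<noteq> 0"
    using S_pos[of _ "Suc k"] unfolding S_def by fastforce
  then show ?thesis unfolding yr_def S_def
    by (intro continuous_intros) auto
qed

lemma yr_inj: "0 \<le> a \<Longrightarrow> 0 \<le> b \<Longrightarrow> 1 \<le> k \<Longrightarrow> yr k a = yr k b \<Longrightarrow> a = b"
  by (metis yr_mono_iff order.antisym order_refl)

definition rinv :: "nat \<Rightarrow> real \<Rightarrow> real" where "rinv k x = (THE r. 0 \<le> r \<and> yr k r = x)"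

lemma yr_surj: assumes k: "1 \<le> k" and x: "0 \<le> x" "x < 1" shows "\<exists>r\<ge>0. yr k r = x"
proof -
  define R where "R = 1 / (1 - x)"
  have R: "R \<ge> 1" using x unfolding R_def by (simp add: field_simps)
  have "1 + R \<le> S (Suc k) R"
  proof -
    have "1 + R * 1 \<le> 1 + R * S k R" using S_pos[of R k] R k by (intro add_left_mono mult_left_mono) auto
    then show ?thesis using S_Suc'[of k R] by simp
  qed
  then have "1 / S (Suc k) R \<le> 1 / (1 + R)" using R by (intro divide_left_mono) auto
  also have "\<dots> \<le> 1 / R" using R by (intro divide_left_mono) auto
  also have "\<dots> = 1 - x" unfolding R_def by simp
  finally have "x \<le> yr k R" using one_minus_yr[of R k] R by simp
  moreover have "yr k 0 \<le> x" using x by (simp add: yr_def)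
  ultimately have "\<exists>r. 0 \<le> r \<and> r \<le> R \<and> yr k r = x"
    by (intro IVT'[OF _ _ _ yr_cont]) (use R in simp_all)
  then show ?thesis by blast
qed

lemma rinv_eq: assumes k: "1 \<le> k" and r: "0 \<le> r" "yr k r = x" shows "rinv k x = r"
  unfolding rinv_def
proof (rule the_equality)
  show "0 \<le> r \<and> yr k r = x" using r by simp
next
  fix s assume "0 \<le> s \<and> yr k s = x"
  then have s: "0 \<le> s" "yr k s = yr k r" using r by auto
  show "s = r" by (rule yr_inj[OF s(1) r(1) k s(2)])
qed

lemma rinv: assumes k: "1 \<le> k" and x: "0 \<le> x" "x < 1" shows "0 \<le> rinv k x \<and> yr k (rinv k x) = x"
proof -
  obtain r where r: "r \<ge> 0" "yr k r = x" using yr_surj[OF assms] by auto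
  have "rinv k x = r" by (rule rinv_eq[OF k r])
  then show ?thesis using r by simp
qed

lemma rinv_yr: assumes k: "1 \<le> k" and r: "0 \<le> r" shows "rinv k (yr k r) = r"
  by (rule rinv_eq[OF k r refl])

definition F :: "nat \<Rightarrow> real \<Rightarrow> real" where
  "F k x = (if 0 \<le> x \<and> x < 1 then fr k (rinv k x) else 0)"

definition gg :: "nat \<Rightarrow> real \<Rightarrow> real" where "gg k t = t ^ k - t ^ (k+1)"

lemma gg_deriv: "1 \<le> k \<Longrightarrow> DERIV (gg k) t :> t ^ (k - 1) * (real k - (real k + 1) * t)"
proof -
  assume k: "1 \<le> k"
  have "DERIV (gg k) t :> real k * t ^ (k - 1) - real (k + 1) * t ^ k"
    unfolding gg_def by (rule derivative_eq_intros refl)+ simp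
  moreover have "t ^ k = t ^ (k - 1) * t" using k by (metis Suc_diff_le diff_Suc_1 power_Suc2)
  ultimately show ?thesis by (simp add: algebra_simps)
qed

lemma gg_cont: "continuous_on A (gg k)"
  unfolding gg_def by (intro continuous_intros)

lemma gg_inc: assumes k: "1 \<le> k" and "0 \<le> a" "a < b" "b \<le> real k / (real k + 1)" shows "gg k a < gg k b"
proof (rule DERIV_pos_imp_increasing_open[OF \<open>a < b\<close> _ gg_cont])
  fix t assume t: "a < t" "t < b"
  have "(real k + 1) * t < (real k + 1) * b" using t by simp
  moreover have "(real k + 1) * b \<le> real k" using assms by (simp add: field_simps)
  ultimately have "(real k + 1) * t < real k" by (rule less_le_trans)
  moreover have "t > 0" using t assms by simp
  ultimately show "\<exists>y. DERIV (gg k) t :> y \<and> y > 0" using gg_deriv[OF k, of t] by auto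
qed

lemma gg_dec: assumes k: "1 \<le> k" and "real k / (real k + 1) \<le> a" "a < b" shows "gg k a > gg k b"
proof (rule DERIV_neg_imp_decreasing_open[OF \<open>a < b\<close> _ gg_cont])
  fix t assume t: "a < t" "t < b"
  have "(real k + 1) * t > (real k + 1) * a" using t by simp
  moreover have "(real k + 1) * a \<ge> real k" using assms by (simp add: field_simps)
  ultimately have "(real k + 1) * t > real k" by linarith
  moreover have "t > 0" using t assms by (smt (verit) divide_nonneg_nonneg of_nat_0_le_iff)
  ultimately show "\<exists>y. DERIV (gg k) t :> y \<and> y < 0" using gg_deriv[OF k, of t]
    by (intro exI[of _ "t ^ (k - 1) * (real k - (real k + 1) * t)"]) (auto intro: mult_pos_neg)
qed

lemma gg_inj_low: "1 \<le> k \<Longrightarrow> 0 \<le> a \<Longrightarrow> 0 \<le> b \<Longrightarrow> a \<le> real k / (real k + 1) \<Longrightarrow> b \<le> real k / (real k + 1)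
   \<Longrightarrow> gg k a = gg k b \<Longrightarrow> a = b"
  by (metis gg_inc linorder_neqE_linordered_idom order_less_irrefl)

lemma gg_inj_high: "1 \<le> k \<Longrightarrow> real k / (real k + 1) \<le> a \<Longrightarrow> real k / (real k + 1) \<le> b
   \<Longrightarrow> gg k a = gg k b \<Longrightarrow> a = b"
  by (metis gg_dec linorder_neqE_linordered_idom order_less_irrefl)

lemma F_eq: "1 \<le> k \<Longrightarrow> 0 \<le> r \<Longrightarrow> F k (yr k r) = fr k r"
  using yr_range[of r k] rinv_yr[of k r] by (simp add: F_def)

lemma sides: assumes k: "1 \<le> k" and x: "0 \<le> x" "x < 1"
  shows "(x \<le> real k / (real k + 1) \<and> real k / (real k + 1) \<le> F k x) \<or>
         (F k x \<le> real k / (real k + 1) \<and> real k / (real k + 1) \<le> x)"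
proof -
  define r where "r = rinv k x"
  have r: "0 \<le> r" "yr k r = x" using rinv[OF k x] r_def by auto
  have Fx: "F k x = fr k r" using x r_def by (simp add: F_def)
  show ?thesis
  proof (cases "r \<le> 1")
    case True
    then have "x \<le> yr k 1" "fr k 1 \<le> fr k r" using yr_mono_iff[OF r(1) _ k, of 1] r fr_anti[OF r(1) True] by auto
    then show ?thesis using Fx yr_one fr_one by auto
  next
    case False
    then have "yr k 1 \<le> x" "fr k r \<le> fr k 1" using yr_mono_iff[OF _ r(1) k, of 1] r fr_anti[of 1 r k] by auto
    then show ?thesis using Fx yr_one fr_one by auto
  qed
qed

lemma F_rel: "1 \<le> k \<Longrightarrow> 0 \<le> x \<Longrightarrow> x < 1 \<Longrightarrow> gg k (F k x) = gg k x"
  using rinv[of k x] yr_rel[of "rinv k x" k] unfolding gg_def F_def by auto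

lemma roots: assumes k: "1 \<le> k" and x: "0 \<le> x" "x < 1" and t: "0 \<le> t" "t \<le> 1" "gg k t = gg k x"
  shows "t = x \<or> t = F k x"
proof -
  let ?m = "real k / (real k + 1)"
  have m: "0 \<le> ?m" by simp
  have Fr: "gg k (F k x) = gg k x" using F_rel[OF k x] .
  have F0: "0 \<le> F k x" using fr_range rinv[OF k x] x by (simp add: F_def)
  consider "t \<le> ?m" | "?m \<le> t" by linarith
  then show ?thesis
  proof cases
    case 1
    from sides[OF k x] show ?thesis
    proof
      assume "x \<le> ?m \<and> ?m \<le> F k x"
      then show ?thesis using gg_inj_low[OF k t(1) x(1) 1] t by auto
    next
      assume "F k x \<le> ?m \<and> ?m \<le> x"
      then show ?thesis using gg_inj_low[OF k t(1) F0 1] t Fr by auto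
    qed
  next
    case 2
    from sides[OF k x] show ?thesis
    proof
      assume "x \<le> ?m \<and> ?m \<le> F k x"
      then show ?thesis using gg_inj_high[OF k 2, of "F k x"] t Fr by auto
    next
      assume "F k x \<le> ?m \<and> ?m \<le> x"
      then show ?thesis using gg_inj_high[OF k 2, of x] t by auto
    qed
  qed
qed

definition P :: "nat \<Rightarrow> (real \<Rightarrow> real) \<Rightarrow> bool" where
  "P k f = (antimono_on {0..1} f \<and> (\<forall>x\<in>{0..1}. f x \<in> {0..1}) \<and>
      (\<forall>x\<in>{0..1}. f x ^ k - f x ^ (k+1) = x ^ k - x ^ (k+1)) \<and>
      (\<forall>x. x \<notin> {0..1} \<longrightarrow> f x = 0))"

lemma F_range: "1 \<le> k \<Longrightarrow> 0 \<le> F k x \<and> F k x \<le> 1"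
  using fr_range rinv[of k x] by (simp add: F_def)

lemma F_P: assumes k: "1 \<le> k" shows "P k (F k)"
  unfolding P_def
proof (intro conjI ballI allI impI)
  show "antimono_on {0..1} (F k)"
  proof (rule monotone_onI)
    fix x y :: real assume xy: "x \<in> {0..1}" "y \<in> {0..1}" "x \<le> y"
    show "F k y \<le> F k x"
    proof (cases "y = 1")
      case True then show ?thesis using F_range[OF k, of x] by (simp add: F_def)
    next
      case False
      then have "y < 1" "x < 1" using xy by auto
      then have "rinv k x \<le> rinv k y" using rinv[OF k, of x] rinv[OF k, of y] xy yr_mono_iff[OF _ _ k, of "rinv k x" "rinv k y"] by auto
      then show ?thesis using fr_anti[of "rinv k x" "rinv k y" k] rinv[OF k, of x] xy \<open>y<1\<close> \<open>x<1\<close> by (simp add: F_def)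
    qed
  qed
next
  fix x :: real assume "x \<in> {0..1}" then show "F k x \<in> {0..1}" using F_range[OF k] by auto
next
  fix x :: real assume x: "x \<in> {0..1}"
  show "F k x ^ k - F k x ^ (k+1) = x ^ k - x ^ (k+1)"
  proof (cases "x = 1")
    case True then show ?thesis using k by (simp add: F_def)
  next
    case False then show ?thesis using F_rel[OF k, of x] x by (simp add: gg_def)
  qed
next
  fix x :: real assume "x \<notin> {0..1}" then show "F k x = 0" by (auto simp: F_def)
qed

lemma P_unique: assumes k: "1 \<le> k" and G: "P k G" shows "G = F k"
proof
  fix x :: real
  let ?m = "real k / (real k + 1)"
  have anti: "\<And>a b. a \<in> {0..1} \<Longrightarrow> b \<in> {0..1} \<Longrightarrow> a \<le> b \<Longrightarrow> G b \<le> G a"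
    using G unfolding P_def monotone_on_def by blast
  have rng: "\<And>a. a \<in> {0..1} \<Longrightarrow> 0 \<le> G a \<and> G a \<le> 1" using G unfolding P_def by auto
  have rel: "\<And>a. a \<in> {0..1} \<Longrightarrow> gg k (G a) = gg k a" using G unfolding P_def gg_def by auto
  have two: "\<And>a. 0 \<le> a \<Longrightarrow> a < 1 \<Longrightarrow> G a = a \<or> G a = F k a"
    using roots[OF k] rng rel by auto
  have m01: "0 \<le> ?m" "?m < 1" by auto
  have Fm: "F k ?m = ?m" using F_eq[OF k, of 1] yr_one fr_one by simp
  have lowF: "\<And>z. 0 \<le> z \<Longrightarrow> z < ?m \<Longrightarrow> ?m \<le> F k z"
    using sides[OF k] m01 by fastforce
  have highF: "\<And>z. ?m < z \<Longrightarrow> z < 1 \<Longrightarrow> F k z \<le> ?m"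
    using sides[OF k] m01 by (smt (verit))
  show "G x = F k x"
  proof (cases "0 \<le> x \<and> x < 1")
    case True
    then have x: "0 \<le> x" "x < 1" by auto
    show ?thesis
    proof (rule ccontr)
      assume ne: "G x \<noteq> F k x"
      then have Gx: "G x = x" using two[OF x] by auto
      then have xF: "x \<noteq> F k x" using ne by simp
      then have xm: "x \<noteq> ?m" using Fm by auto
      consider "x < ?m" | "?m < x" using xm by linarith
      then show False
      proof cases
        case 1
        define z where "z = (x + ?m) / 2"
        have h: "\<And>a b::real. a < b \<Longrightarrow> a < (a+b)/2 \<and> (a+b)/2 < b" by auto
        have z1: "x < z" "z < ?m" using h[OF 1] unfolding z_def by auto
        have z3: "0 \<le> z" using z1 x by linarith
        note z = z1 z3
        have "G z \<le> G x" using anti[of x z] z x m01 by auto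
        then have "G z < z" using Gx z by simp
        then have "G z = F k z" using two[of z] z m01 by auto
        moreover have "?m \<le> F k z" using lowF z by auto
        ultimately show False using \<open>G z \<le> G x\<close> Gx 1 by simp
      next
        case 2
        define z where "z = (x + ?m) / 2"
        have h: "\<And>a b::real. a < b \<Longrightarrow> a < (a+b)/2 \<and> (a+b)/2 < b" by auto
        have z1: "z < x" "?m < z" using h[OF 2] unfolding z_def by (auto simp: add.commute)
        have z3: "0 \<le> z" using z1 m01 by linarith
        note z = z1 z3
        have "G x \<le> G z" using anti[of z x] z x m01 by auto
        then have "z < G z" using Gx z by simp
        then have "G z = F k z" using two[of z] z x by auto
        moreover have "F k z \<le> ?m" using highF z x by auto
        ultimately show False using \<open>G x \<le> G z\<close> Gx 2 by simp
      qed
    qed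
  next
    case False
    show ?thesis
    proof (cases "x = 1")
      case True
      have "gg k (G 1) = 0" using rel[of 1] by (simp add: gg_def)
      then have "G 1 ^ k * (1 - G 1) = 0" by (simp add: gg_def algebra_simps)
      then have "G 1 = 0 \<or> G 1 = 1" by auto
      moreover have "G 1 \<noteq> 1"
      proof
        assume "G 1 = 1"
        then have "1 \<le> G ?m" using anti[of ?m 1] m01 by auto
        moreover have "G ?m = ?m" using two[of ?m] m01 Fm by auto
        ultimately show False using m01 by simp
      qed
      ultimately show ?thesis using True by (simp add: F_def)
    next
      case False
      then have "x \<notin> {0..1}" using \<open>\<not> (0 \<le> x \<and> x < 1)\<close> by auto
      then have "G x = 0" using G unfolding P_def by blast
      moreover have "F k x = 0" using \<open>x \<notin> {0..1}\<close> unfolding F_def by auto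
      ultimately show ?thesis by simp
    qed
  qed
qed

lemma fk_eq: "1 \<le> k \<Longrightarrow> fk k = F k"
  unfolding fk_def using F_P P_unique unfolding P_def
  by (intro the_equality) blast+

lemma alg: assumes A: "A > 0" and B: "(B::real) > 0" shows "(1 / B) * (r * A / B) ^ n / (A / B) ^ Suc n = r ^ n / A"
proof -
  define d where "d = A / B"
  define c where "c = d ^ n"
  have d: "d > 0" using A B unfolding d_def by simp
  have c: "c > 0" using d unfolding c_def by simp
  have 1: "(r * A / B) ^ n = r ^ n * c" unfolding c_def d_def
    by (metis power_mult_distrib times_divide_eq_right)
  have 2: "(A / B) ^ Suc n = d * c" unfolding c_def d_def by simp
  have 3: "B * d = A" unfolding d_def using B by simp
  have "(1 / B) * (r ^ n * c) / (d * c) = r ^ n / (B * d)" using c d B by (simp add: field_simps)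
  then show ?thesis unfolding 1 2 3 .
qed

lemma T_eq: assumes k: "1 \<le> k" and r: "0 \<le> r" shows "Tkj k (Suc n) (yr k r) = r ^ n / S k r"
proof -
  have p1: "S k r > 0" using S_pos[OF r k] by simp
  have p2: "S (Suc k) r > 0" using S_pos[OF r, of "Suc k"] by simp
  have f: "fk k (yr k r) = S k r / S (Suc k) r" using fk_eq[OF k] F_eq[OF k r] by (simp add: fr_def)
  have y: "yr k r = r * S k r / S (Suc k) r" by (rule yr_def)
  have "Tkj k (Suc n) (yr k r) = (1 - yr k r) * yr k r ^ n / fk k (yr k r) ^ Suc n"
    unfolding Tkj_def by simp
  also have "\<dots> = (1 / S (Suc k) r) * yr k r ^ n / (S k r / S (Suc k) r) ^ Suc n"
    unfolding one_minus_yr[OF r] f by (rule refl)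
  also have "\<dots> = (1 / S (Suc k) r) * (r * S k r / S (Suc k) r) ^ n / (S k r / S (Suc k) r) ^ Suc n"
    unfolding y by (rule refl)
  also have "\<dots> = r ^ n / S k r" by (rule alg[OF p1 p2])
  finally show ?thesis .
qed

lemma D_eq: assumes k: "1 \<le> k" and r: "0 \<le> r" shows "Dkj k j (yr k r) = S j r / S k r"
proof -
  have "Dkj k j (yr k r) = (\<Sum>i<j. Tkj k (Suc i) (yr k r))"
    unfolding Dkj_def by (simp add: sum.atLeast1_atMost_eq)
  also have "\<dots> = (\<Sum>i<j. r ^ i / S k r)" using T_eq[OF k r] by simp
  also have "\<dots> = S j r / S k r" unfolding S_def by (simp add: sum_divide_distrib)
  finally show ?thesis .
qed

lemma S_add: "S (j + n) r = S j r + r ^ j * S n r"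
proof (induction n)
  case 0 then show ?case by (simp add: S_def)
next
  case (Suc n)
  have "S (j + Suc n) r = S (j + n) r + r ^ (j + n)" by (simp add: S_Suc)
  also have "\<dots> = S j r + r ^ j * (S n r + r ^ n)" using Suc by (simp add: power_add distrib_left)
  finally show ?case by (simp add: S_Suc)
qed

lemma ratio: assumes a: "0 \<le> a" "a \<le> b" and j: "1 \<le> j" "j \<le> k"
  shows "S j b / S k b \<le> S j a / S k a"
proof -
  have b: "0 \<le> b" using a by simp
  have key: "S j b * a ^ j \<le> S j a * b ^ j"
  proof -
    have "(\<Sum>i<j. b ^ i * a ^ j) \<le> (\<Sum>i<j. a ^ i * b ^ j)"
    proof (rule sum_mono)
      fix i assume "i \<in> {..<j}"
      then have i: "i \<le> j" by simp
      have ea: "a ^ j = a ^ i * a ^ (j - i)" using i by (simp add: power_add[symmetric])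
      have eb: "b ^ j = b ^ i * b ^ (j - i)" using i by (simp add: power_add[symmetric])
      have "a ^ (j - i) \<le> b ^ (j - i)" using a by (intro power_mono) auto
      then have "(a^i * b^i) * a ^ (j - i) \<le> (a^i * b^i) * b ^ (j - i)" using a b by (intro mult_left_mono) auto
      then show "b ^ i * a ^ j \<le> a ^ i * b ^ j" unfolding ea eb by (simp only: ac_simps)
    qed
    then show ?thesis by (simp only: S_def sum_distrib_right)
  qed
  have Sk: "\<And>r. S k r = S j r + r ^ j * S (k - j) r" using S_add[of j "k - j"] j by simp
  have "S j b * a ^ j * S (k - j) a \<le> S j a * b ^ j * S (k - j) b"
    by (rule mult_mono[OF key S_mono[OF a, of "k-j"]]) (use S_nonneg[OF a(1)] S_nonneg[OF b] b in auto)
  then have "S j b * S k a \<le> S j a * S k b"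
    unfolding Sk by (simp add: distrib_left ac_simps)
  moreover have k1: "1 \<le> k" using j by simp
  have "S k a > 0" using S_pos[OF a(1) k1] by simp
  moreover have "S k b > 0" using S_pos[OF b k1] by simp
  ultimately show ?thesis by (simp add: divide_simps mult.commute)
qed

theorem mainTheorem9:
  fixes k j :: nat
  assumes "1 \<le> k" and "1 \<le> j" and "j \<le> k"
  shows "antimono_on {0..<1} (Dkj k j)"
proof (rule monotone_onI)
  fix x y :: real assume xy: "x \<in> {0..<1}" "y \<in> {0..<1}" "x \<le> y"
  define a where "a = rinv k x"
  define b where "b = rinv k y"
  have a: "0 \<le> a" "yr k a = x" using rinv[OF assms(1), of x] xy a_def by auto
  have b: "0 \<le> b" "yr k b = y" using rinv[OF assms(1), of y] xy b_def by auto
  have ab: "a \<le> b" using yr_mono_iff[OF a(1) b(1) assms(1)] a b xy by simp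
  show "Dkj k j y \<le> Dkj k j x"
    using D_eq[OF assms(1) a(1)] D_eq[OF assms(1) b(1)] ratio[OF a(1) ab assms(2,3)] a b by simp
qed

end
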